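(* There is a constant $c>0$ such that the following holds for all $n\ge 1$. Let $q,t_1,\dots,t_n$ be $n+1$ distinct qubits, and for each $i$ let $U_i$ be an arbitrary $2\times 2$ unitary and $G_i$ the controlled-$U_i$ gate with control qubit $q$ and target qubit $t_i$. Then the operator $G_nG_{n-1}\cdots G_1$ can be embedded, using at most $cn$ ancillae, in a quantum circuit of depth at most $c\log n$ (for $n\ge 2$).
   Context: Qubits have computational basis $|0\rangle,|1\rangle$. For a $2\times 2$ unitary $U$, the controlled-$U$ gate on (control, target) is the $4\times4$ unitary $\begin{pmatrix}I&0\\0&U\end{pmatrix}$, i.e. it applies $U$ to the target when the control is $|1\rangle$. A one-layer circuit is a tensor product of arbitrary one-qubit and two-qubit unitary gates acting on pairwise disjoint sets of qubits (each qubit interacts with at most one gate); a circuit of depth $k$ is a product of $k$ one-layer circuits. An operator $F$ on $n'$ qubits is embedded in an operator $M$ on $n'+m$ qubits using $m$ ancillae if $M$ maps the subspace where the $m$ ancilla qubits are all $|0\rangle$ into itself and on that subspace equals $F\otimes\mathbf 1$, i.e. $M(|\psi\rangle\otimes|0\cdots0\rangle)=(F|\psi\rangle)\otimes|0\cdots0\rangle$ for all $|\psi\rangle$. *)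

theory Defs
  imports Complex_Main
begin

text \<open>Qubits are natural numbers; an N-qubit system uses qubits {0..<N}.
  A computational basis state of a set S of qubits is the subset of S of qubits in state |1>.
  An operator on qubit set S is a matrix indexed by basis states (subsets of S).\<close>

type_synonym qop = "nat set \<Rightarrow> nat set \<Rightarrow> complex"

text \<open>2x2 matrices indexed by bits (False = |0>, True = |1>); unitarity U U^dagger = I.\<close>
definition unitary2 :: "(bool \<Rightarrow> bool \<Rightarrow> complex) \<Rightarrow> bool" where
  "unitary2 U \<longleftrightarrow> (\<forall>a b. (\<Sum>c\<in>UNIV. U a c * cnj (U b c)) = (if a = b then 1 else 0))"

definition unitary_on :: "nat set \<Rightarrow> qop \<Rightarrow> bool" where
  "unitary_on S g \<longleftrightarrow> (\<forall>x\<subseteq>S. \<forall>y\<subseteq>S.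
      (\<Sum>z\<in>Pow S. g x z * cnj (g y z)) = (if x = y then 1 else 0))"

definition qid :: qop where
  "qid x y = (if x = y then 1 else 0)"

definition qmult :: "nat \<Rightarrow> qop \<Rightarrow> qop \<Rightarrow> qop" where
  "qmult N A B x y = (\<Sum>z\<in>Pow {0..<N}. A x z * B z y)"

text \<open>One-layer circuit on N qubits: tensor product of one- and two-qubit unitary gates
  on pairwise disjoint blocks (idle qubits are covered by identity one-qubit gates).\<close>
definition is_layer :: "nat \<Rightarrow> qop \<Rightarrow> bool" where
  "is_layer N L \<longleftrightarrow> (\<exists>P g.
      (\<forall>S\<in>P. S \<subseteq> {0..<N} \<and> (card S = 1 \<or> card S = 2) \<and> unitary_on S (g S)) \<and>
      (\<forall>S\<in>P. \<forall>T\<in>P. S \<noteq> T \<longrightarrow> S \<inter> T = {}) \<and>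
      \<Union>P = {0..<N} \<and>
      (\<forall>x\<subseteq>{0..<N}. \<forall>y\<subseteq>{0..<N}. L x y = (\<Prod>S\<in>P. g S (x \<inter> S) (y \<inter> S))))"

fun circuit :: "nat \<Rightarrow> nat \<Rightarrow> qop \<Rightarrow> bool" where
  "circuit N 0 M \<longleftrightarrow> (\<forall>x\<subseteq>{0..<N}. \<forall>y\<subseteq>{0..<N}. M x y = qid x y)"
| "circuit N (Suc k) M \<longleftrightarrow> (\<exists>L M'. is_layer N L \<and> circuit N k M' \<and>
      (\<forall>x\<subseteq>{0..<N}. \<forall>y\<subseteq>{0..<N}. M x y = qmult N L M' x y))"

definition ctrl_gate :: "nat \<Rightarrow> nat \<Rightarrow> (bool \<Rightarrow> bool \<Rightarrow> complex) \<Rightarrow> qop" where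
  "ctrl_gate c t U x y =
     (if c \<in> y then (if x - {t} = y - {t} then U (t \<in> x) (t \<in> y) else 0)
      else qid x y)"

fun ctrl_prod :: "nat \<Rightarrow> (nat \<Rightarrow> bool \<Rightarrow> bool \<Rightarrow> complex) \<Rightarrow> nat \<Rightarrow> qop" where
  "ctrl_prod N U 0 = qid"
| "ctrl_prod N U (Suc k) = qmult N (ctrl_gate 0 (Suc k) (U (Suc k))) (ctrl_prod N U k)"

text \<open>F on qubits {0..<n'} is embedded in M on {0..<n'+m} using the m ancillae n',...,n'+m-1:
  M(|psi> (x) |0..0>) = (F|psi>) (x) |0..0>, checked on basis columns.\<close>
definition embeds :: "nat \<Rightarrow> nat \<Rightarrow> qop \<Rightarrow> qop \<Rightarrow> bool" where
  "embeds n' m F M \<longleftrightarrow> (\<forall>x\<subseteq>{0..<n'+m}. \<forall>y\<subseteq>{0..<n'}.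
      M x y = (if x \<subseteq> {0..<n'} then F x y else 0))"

end

theory Submission
  imports Defs
begin

definition perm_op :: "(nat set \<Rightarrow> nat set) \<Rightarrow> qop" where
  "perm_op \<tau> x y = (if x = \<tau> y then 1 else 0)"

fun prodL :: "nat \<Rightarrow> qop list \<Rightarrow> qop" where
  "prodL N [] = qid"
| "prodL N (L # Ls) = qmult N L (prodL N Ls)"

lemma circuit_prodL:
  assumes "\<forall>L\<in>set Ls. is_layer N L"
  shows "circuit N (length Ls) (prodL N Ls)"
  using assms by (induction Ls) auto

lemma prod_ind:
  assumes "finite A"
  shows "(\<Prod>a\<in>A. if Q a then (1::complex) else 0) = (if \<forall>a\<in>A. Q a then 1 else 0)"
  using assms by (induction A rule: finite_induct) auto

lemma layer_blk:
  fixes blk :: "nat \<Rightarrow> nat set" and g :: "nat set \<Rightarrow> qop"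
  assumes inblk: "\<And>e. e < N \<Longrightarrow> e \<in> blk e"
    and sub: "\<And>e. e < N \<Longrightarrow> blk e \<subseteq> {0..<N}"
    and cd: "\<And>e. e < N \<Longrightarrow> card (blk e) = 1 \<or> card (blk e) = 2"
    and same: "\<And>e e'. e < N \<Longrightarrow> e' \<in> blk e \<Longrightarrow> blk e' = blk e"
    and un: "\<And>e. e < N \<Longrightarrow> unitary_on (blk e) (g (blk e))"
    and L: "\<And>x y. x \<subseteq> {0..<N} \<Longrightarrow> y \<subseteq> {0..<N} \<Longrightarrow>
              L x y = (\<Prod>S\<in>blk ` {0..<N}. g S (x \<inter> S) (y \<inter> S))"
  shows "is_layer N L"
  unfolding is_layer_def
proof (intro exI[of _ "blk ` {0..<N}"] exI[of _ g] conjI)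
  show "\<forall>S\<in>blk ` {0..<N}. S \<subseteq> {0..<N} \<and> (card S = 1 \<or> card S = 2) \<and> unitary_on S (g S)"
    using sub cd un by auto
  show "\<forall>S\<in>blk ` {0..<N}. \<forall>T\<in>blk ` {0..<N}. S \<noteq> T \<longrightarrow> S \<inter> T = {}"
  proof (intro ballI impI)
    fix S T assume "S \<in> blk ` {0..<N}" "T \<in> blk ` {0..<N}" "S \<noteq> T"
    then obtain e e' where ee: "e<N" "e'<N" "S = blk e" "T = blk e'"
      by (metis atLeastLessThan_iff imageE)
    show "S \<inter> T = {}"
    proof (rule ccontr)
      assume "S \<inter> T \<noteq> {}"
      then obtain f where f: "f \<in> blk e" "f \<in> blk e'" using ee by auto
      have "blk f = blk e" by (rule same[OF ee(1) f(1)])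
      moreover have "blk f = blk e'" by (rule same[OF ee(2) f(2)])
      ultimately have "blk e = blk e'" by simp
      then show False using \<open>S \<noteq> T\<close> ee by simp
    qed
  qed
  show "\<Union> (blk ` {0..<N}) = {0..<N}"
  proof
    show "\<Union> (blk ` {0..<N}) \<subseteq> {0..<N}"
    proof (rule Union_least)
      fix X assume "X \<in> blk ` {0..<N}"
      then obtain e where "e < N" "X = blk e" by (metis atLeastLessThan_iff imageE)
      then show "X \<subseteq> {0..<N}" using sub by simp
    qed
    show "{0..<N} \<subseteq> \<Union> (blk ` {0..<N})" using inblk by fastforce
  qed
  show "\<forall>x\<subseteq>{0..<N}. \<forall>y\<subseteq>{0..<N}. L x y = (\<Prod>S\<in>blk ` {0..<N}. g S (x \<inter> S) (y \<inter> S))"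
    using L by auto
qed

lemma perm_layer:
  fixes \<tau> :: "nat set \<Rightarrow> nat set" and blk :: "nat \<Rightarrow> nat set"
  assumes inblk: "\<And>e. e < N \<Longrightarrow> e \<in> blk e"
    and sub: "\<And>e. e < N \<Longrightarrow> blk e \<subseteq> {0..<N}"
    and cd: "\<And>e. e < N \<Longrightarrow> card (blk e) = 1 \<or> card (blk e) = 2"
    and same: "\<And>e e'. e < N \<Longrightarrow> e' \<in> blk e \<Longrightarrow> blk e' = blk e"
    and \<tau>D: "\<And>y. y \<subseteq> {0..<N} \<Longrightarrow> \<tau> y \<subseteq> {0..<N}"
    and inv: "\<And>y. \<tau> (\<tau> y) = y"
    and loc: "\<And>e y. e < N \<Longrightarrow> y \<subseteq> {0..<N} \<Longrightarrow> \<tau> y \<inter> blk e = \<tau> (y \<inter> blk e) \<inter> blk e"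
  shows "is_layer N (perm_op \<tau>)"
proof (rule layer_blk[where blk=blk and g="\<lambda>S u v. if u = \<tau> v \<inter> S then 1 else 0"])
  show "\<And>e. e < N \<Longrightarrow> e \<in> blk e" by (rule inblk)
  show "\<And>e. e < N \<Longrightarrow> blk e \<subseteq> {0..<N}" by (rule sub)
  show "\<And>e. e < N \<Longrightarrow> card (blk e) = 1 \<or> card (blk e) = 2" by (rule cd)
  show "\<And>e e'. e < N \<Longrightarrow> e' \<in> blk e \<Longrightarrow> blk e' = blk e" by (rule same)
next
  fix e assume e: "e < N"
  define S where "S = blk e"
  have fin: "finite S" using sub[OF e] unfolding S_def by (meson finite_atLeastLessThan finite_subset)
  have rr: "\<tau> (\<tau> z \<inter> S) \<inter> S = z" if "z \<subseteq> S" for z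
  proof -
    have "\<tau> z \<subseteq> {0..<N}" using \<tau>D that sub[OF e] unfolding S_def by blast
    then have "\<tau> (\<tau> z) \<inter> S = \<tau> (\<tau> z \<inter> S) \<inter> S" using loc[OF e] unfolding S_def by blast
    then show ?thesis using inv that by auto
  qed
  show "unitary_on (blk e) ((\<lambda>S u v. if u = \<tau> v \<inter> S then 1 else 0) (blk e))"
    unfolding unitary_on_def S_def[symmetric]
  proof (intro allI impI)
    fix x y assume xy: "x \<subseteq> S" "y \<subseteq> S"
    have "(\<Sum>z\<in>Pow S. (if x = \<tau> z \<inter> S then 1 else 0) * cnj (if y = \<tau> z \<inter> S then 1 else 0))
        = (\<Sum>z\<in>Pow S. if z = \<tau> x \<inter> S then (if x = y then 1 else 0) else (0::complex))"
    proof (rule sum.cong)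
      fix z assume z: "z \<in> Pow S"
      have "(x = \<tau> z \<inter> S) = (z = \<tau> x \<inter> S)" using rr[of x] rr[of z] xy z by auto
      then show "(if x = \<tau> z \<inter> S then 1 else 0) * cnj (if y = \<tau> z \<inter> S then 1 else 0)
          = (if z = \<tau> x \<inter> S then (if x = y then 1 else 0) else (0::complex))" by auto
    qed simp
    also have "\<dots> = (if x = y then 1 else 0)" using fin by (subst sum.delta) auto
    finally show "(\<Sum>z\<in>Pow S. (if x = \<tau> z \<inter> S then 1 else 0) * cnj (if y = \<tau> z \<inter> S then 1 else 0))
        = (if x = y then 1 else 0)" .
  qed
next
  fix x y assume x: "x \<subseteq> {0..<N}" and y: "y \<subseteq> {0..<N}"
  have "(\<Prod>S\<in>blk ` {0..<N}. (if x \<inter> S = \<tau> (y \<inter> S) \<inter> S then 1 else 0))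
      = (\<Prod>S\<in>blk ` {0..<N}. (if x \<inter> S = \<tau> y \<inter> S then 1 else (0::complex)))"
  proof (rule prod.cong)
    fix S assume "S \<in> blk ` {0..<N}"
    then obtain e where "e < N" "S = blk e" by auto
    then show "(if x \<inter> S = \<tau> (y \<inter> S) \<inter> S then 1 else 0) = (if x \<inter> S = \<tau> y \<inter> S then 1 else (0::complex))"
      using loc[OF _ y] by simp
  qed simp
  also have "\<dots> = (if \<forall>S\<in>blk ` {0..<N}. x \<inter> S = \<tau> y \<inter> S then 1 else 0)"
    by (rule prod_ind) simp
  also have "(\<forall>S\<in>blk ` {0..<N}. x \<inter> S = \<tau> y \<inter> S) = (x = \<tau> y)"
  proof
    assume h: "\<forall>S\<in>blk ` {0..<N}. x \<inter> S = \<tau> y \<inter> S"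
    have ty: "\<tau> y \<subseteq> {0..<N}" using \<tau>D y by blast
    show "x = \<tau> y"
    proof
      show "x \<subseteq> \<tau> y"
      proof
        fix f assume f: "f \<in> x"
        then have "f < N" using x by auto
        then have "x \<inter> blk f = \<tau> y \<inter> blk f" using h by auto
        then show "f \<in> \<tau> y" using inblk[OF \<open>f < N\<close>] f by blast
      qed
      show "\<tau> y \<subseteq> x"
      proof
        fix f assume f: "f \<in> \<tau> y"
        then have "f < N" using ty by auto
        then have "x \<inter> blk f = \<tau> y \<inter> blk f" using h by auto
        then show "f \<in> x" using inblk[OF \<open>f < N\<close>] f by blast
      qed
    qed
  qed auto
  finally show "perm_op \<tau> x y = (\<Prod>S\<in>blk ` {0..<N}. (\<lambda>S u v. if u = \<tau> v \<inter> S then 1 else 0) S (x \<inter> S) (y \<inter> S))"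
    unfolding perm_op_def by simp
qed

definition xorl :: "nat set \<Rightarrow> (nat \<Rightarrow> nat) \<Rightarrow> nat set \<Rightarrow> nat set" where
  "xorl Tg c y = {e. (e \<in> y) \<noteq> (e \<in> Tg \<and> c e \<in> y)}"

definition xblk :: "nat set \<Rightarrow> (nat \<Rightarrow> nat) \<Rightarrow> nat \<Rightarrow> nat set" where
  "xblk Tg c e = (if e \<in> Tg then {e, c e} else if e \<in> c ` Tg then {e, the_inv_into Tg c e} else {e})"

lemma xor_layer:
  assumes TgD: "Tg \<subseteq> {0..<N}" and cD: "\<And>t. t \<in> Tg \<Longrightarrow> c t < N"
    and cT: "\<And>t. t \<in> Tg \<Longrightarrow> c t \<notin> Tg" and inj: "inj_on c Tg"
  shows "is_layer N (perm_op (xorl Tg c))"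
proof (rule perm_layer[where blk="xblk Tg c"])
  have ti1: "the_inv_into Tg c e \<in> Tg" "c (the_inv_into Tg c e) = e" if "e \<in> c ` Tg" for e
    using that inj by (auto simp: the_inv_into_into f_the_inv_into_f)
  have ti2: "the_inv_into Tg c (c t) = t" if "t \<in> Tg" for t
    using that inj by (simp add: the_inv_into_f_f)
  show "\<And>e. e < N \<Longrightarrow> e \<in> xblk Tg c e" unfolding xblk_def by auto
  show "\<And>e. e < N \<Longrightarrow> xblk Tg c e \<subseteq> {0..<N}" unfolding xblk_def using TgD cD ti1 ti2 by auto
  show "\<And>e. e < N \<Longrightarrow> card (xblk Tg c e) = 1 \<or> card (xblk Tg c e) = 2"
  proof -
    fix e
    show "card (xblk Tg c e) = 1 \<or> card (xblk Tg c e) = 2"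
    proof (cases "e \<in> Tg")
      case True
      then have "c e \<noteq> e" using cT by metis
      then show ?thesis using True unfolding xblk_def by simp
    next
      case False
      show ?thesis
      proof (cases "e \<in> c ` Tg")
        case True
        then have "the_inv_into Tg c e \<noteq> e" using ti1 False by metis
        then show ?thesis using True False unfolding xblk_def by simp
      qed (simp add: xblk_def False)
    qed
  qed
  show "\<And>e e'. e < N \<Longrightarrow> e' \<in> xblk Tg c e \<Longrightarrow> xblk Tg c e' = xblk Tg c e"
  proof -
    fix e e' assume "e' \<in> xblk Tg c e"
    then show "xblk Tg c e' = xblk Tg c e"
    proof (cases "e \<in> Tg")
      case True
      then show ?thesis using \<open>e' \<in> xblk Tg c e\<close> cT[OF True] ti2[OF True]
        unfolding xblk_def by auto
    next
      case False
      show ?thesis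
      proof (cases "e \<in> c ` Tg")
        case True
        then show ?thesis using \<open>e' \<in> xblk Tg c e\<close> False ti1[OF True]
          unfolding xblk_def by auto
      next
        case False2: False
        then show ?thesis using \<open>e' \<in> xblk Tg c e\<close> False unfolding xblk_def by auto
      qed
    qed
  qed
  show "\<And>y. y \<subseteq> {0..<N} \<Longrightarrow> xorl Tg c y \<subseteq> {0..<N}" unfolding xorl_def using TgD by auto
  show "\<And>y. xorl Tg c (xorl Tg c y) = y" unfolding xorl_def using cT by auto
  have cb: "c f \<in> xblk Tg c e" if "f \<in> xblk Tg c e" "f \<in> Tg" for e f
  proof (cases "e \<in> Tg")
    case True
    then show ?thesis using that cT[OF True] unfolding xblk_def by auto
  next
    case False
    show ?thesis
    proof (cases "e \<in> c ` Tg")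
      case True
      then show ?thesis using that False ti1[OF True] unfolding xblk_def by auto
    next
      case False2: False
      then show ?thesis using that False unfolding xblk_def by auto
    qed
  qed
  show "\<And>e y. e < N \<Longrightarrow> y \<subseteq> {0..<N} \<Longrightarrow> xorl Tg c y \<inter> xblk Tg c e = xorl Tg c (y \<inter> xblk Tg c e) \<inter> xblk Tg c e"
    unfolding xorl_def using cb by auto
qed

lemma unitary_qid:
  assumes "finite S"
  shows "unitary_on S qid"
  unfolding unitary_on_def qid_def
proof (intro allI impI)
  fix x y assume "x \<subseteq> S" "y \<subseteq> S"
  have "(\<Sum>z\<in>Pow S. (if x = z then 1 else 0) * cnj (if y = z then 1 else 0))
     = (\<Sum>z\<in>Pow S. if z = x then (if x = y then 1 else 0) else (0::complex))"
    by (rule sum.cong) auto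
  also have "\<dots> = (if x = y then 1 else 0)" using assms \<open>x \<subseteq> S\<close> by (subst sum.delta) auto
  finally show "(\<Sum>z\<in>Pow S. (if x = z then 1 else 0) * cnj (if y = z then 1 else 0)) = (if x = y then 1 else 0)" .
qed

lemma unitary_ctrl:
  assumes U: "unitary2 U" and ne: "a \<noteq> t"
  shows "unitary_on {t, a} (ctrl_gate a t U)"
proof -
  have u: "U p False * cnj (U q False) + U p True * cnj (U q True) = (if p = q then 1 else 0)" for p q
    using U unfolding unitary2_def by (simp add: UNIV_bool)
  have P: "Pow {t, a} = {{}, {t}, {a}, {t, a}}" by (auto simp: Pow_insert)
  have sub: "x \<subseteq> {t,a} \<longleftrightarrow> x = {} \<or> x = {t} \<or> x = {a} \<or> x = {t,a}" for x by auto
  show ?thesis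
    unfolding unitary_on_def P sub
    using ne u[of True True] u[of True False] u[of False True] u[of False False]
    by (auto simp: ctrl_gate_def qid_def insert_commute algebra_simps)
qed

definition CF :: "(nat \<Rightarrow> bool \<Rightarrow> bool \<Rightarrow> complex) \<Rightarrow> nat \<Rightarrow> qop" where
  "CF U k x y = (if 0 \<in> y then (if x - {1..k} = y - {1..k} then (\<Prod>i\<in>{1..k}. U i (i \<in> x) (i \<in> y)) else 0)
      else qid x y)"

lemma diff_eq_mem: "A - B = C - B \<Longrightarrow> e \<notin> B \<Longrightarrow> (e \<in> A) = (e \<in> C)"
  by blast

lemma z0_mem: "e \<in> (x - {s}) \<union> (y \<inter> {s}) \<longleftrightarrow> (if e = s then e \<in> y else e \<in> x)"
  by auto

lemma ctrl_prod_cf: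
  "k < N \<Longrightarrow> x \<subseteq> {0..<N} \<Longrightarrow> y \<subseteq> {0..<N} \<Longrightarrow> ctrl_prod N U k x y = CF U k x y"
proof (induction k arbitrary: x y)
  case 0
  then show ?case by (simp add: CF_def qid_def)
next
  case (Suc k)
  let ?G = "ctrl_gate 0 (Suc k) (U (Suc k))"
  have "ctrl_prod N U (Suc k) x y = (\<Sum>z\<in>Pow {0..<N}. ?G x z * CF U k z y)"
    using Suc by (simp add: qmult_def)
  also have "\<dots> = CF U (Suc k) x y"
  proof (cases "0 \<in> y")
    case False
    have "(\<Sum>z\<in>Pow {0..<N}. ?G x z * CF U k z y) = (\<Sum>z\<in>Pow {0..<N}. if z = y then ?G x y else 0)"
      using False by (intro sum.cong) (auto simp: CF_def qid_def)
    also have "\<dots> = ?G x y" using Suc.prems by (subst sum.delta) auto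
    finally show ?thesis using False by (simp add: CF_def ctrl_gate_def)
  next
    case True
    define z0 where "z0 = (x - {Suc k}) \<union> (y \<inter> {Suc k})"
    have z0D: "z0 \<in> Pow {0..<N}" using Suc.prems unfolding z0_def by auto
    have "(\<Sum>z\<in>Pow {0..<N}. ?G x z * CF U k z y) = (\<Sum>z\<in>Pow {0..<N}. if z = z0 then ?G x z0 * CF U k z0 y else 0)"
    proof (rule sum.cong)
      fix z assume "z \<in> Pow {0..<N}"
      show "?G x z * CF U k z y = (if z = z0 then ?G x z0 * CF U k z0 y else 0)"
      proof (cases "z = z0")
        case False
        show ?thesis
        proof (cases "CF U k z y = 0")
          case False2: False
          then have h1: "z - {1..k} = y - {1..k}" using True unfolding CF_def by (cases "z - {1..k} = y - {1..k}") simp_all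
          have "0 \<in> z - {1..k}" by (subst h1) (use True in simp)
          then have "0 \<in> z" by simp
          have "x - {Suc k} \<noteq> z - {Suc k}"
          proof
            assume h2: "x - {Suc k} = z - {Suc k}"
            have "z = z0"
            proof (rule set_eqI)
              fix e show "e \<in> z \<longleftrightarrow> e \<in> z0"
              proof (cases "e = Suc k")
                case True
                then show ?thesis using diff_eq_mem[OF h1, of e] unfolding z0_def z0_mem by simp
              next
                case False
                then show ?thesis using diff_eq_mem[OF h2, of e] unfolding z0_def z0_mem by simp
              qed
            qed
            then show False using \<open>z \<noteq> z0\<close> by simp
          qed
          then have "?G x z = 0" using \<open>0 \<in> z\<close> by (simp add: ctrl_gate_def)
          then show ?thesis using \<open>z \<noteq> z0\<close> by simp
        qed (simp add: \<open>z \<noteq> z0\<close>)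
      qed simp
    qed simp
    also have "\<dots> = ?G x z0 * CF U k z0 y" using z0D by (subst sum.delta) auto
    also have "\<dots> = CF U (Suc k) x y"
    proof (cases "x - {1..Suc k} = y - {1..Suc k}")
      case True2: True
      have "0 \<in> x - {1..Suc k}" by (subst True2) (use True in simp)
      then have "0 \<in> x" by simp
      then have "0 \<in> z0" unfolding z0_def by auto
      have G: "?G x z0 = U (Suc k) (Suc k \<in> x) (Suc k \<in> y)"
        using \<open>0 \<in> z0\<close> unfolding ctrl_gate_def z0_def by auto
      have e1: "z0 - {1..k} = y - {1..k}"
      proof (rule set_eqI)
        fix e show "e \<in> z0 - {1..k} \<longleftrightarrow> e \<in> y - {1..k}"
        proof (cases "e = Suc k")
          case True
          then show ?thesis unfolding z0_def z0_mem by simp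
        next
          case False
          show ?thesis
          proof (cases "e \<in> {1..k}")
            case True
            then show ?thesis by simp
          next
            case False3: False
            then have "e \<notin> {1..Suc k}" using False by auto
            then show ?thesis using diff_eq_mem[OF True2, of e] False False3 unfolding z0_def z0_mem by simp
          qed
        qed
      qed
      have pr: "(\<Prod>i\<in>{1..k}. U i (i \<in> z0) (i \<in> y)) = (\<Prod>i\<in>{1..k}. U i (i \<in> x) (i \<in> y))"
        by (rule prod.cong) (auto simp: z0_def)
      have sp: "{1..Suc k} = insert (Suc k) {1..k}" by auto
      have c1: "CF U k z0 y = (\<Prod>i\<in>{1..k}. U i (i \<in> x) (i \<in> y))"
        unfolding CF_def if_P[OF True] if_P[OF e1] pr ..
      have c2: "CF U (Suc k) x y = U (Suc k) (Suc k \<in> x) (Suc k \<in> y) * (\<Prod>i\<in>{1..k}. U i (i \<in> x) (i \<in> y))"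
        unfolding CF_def if_P[OF True] if_P[OF True2] by (subst sp) simp
      show ?thesis unfolding c1 c2 G ..
    next
      case False2: False
      have "CF U k z0 y = 0"
      proof (rule ccontr)
        assume "CF U k z0 y \<noteq> 0"
        then have h1: "z0 - {1..k} = y - {1..k}" using True unfolding CF_def by (cases "z0 - {1..k} = y - {1..k}") simp_all
        have "x - {1..Suc k} = y - {1..Suc k}"
        proof (rule set_eqI)
          fix e show "e \<in> x - {1..Suc k} \<longleftrightarrow> e \<in> y - {1..Suc k}"
          proof (cases "e \<in> {1..Suc k}")
            case False
            then have "e \<notin> {1..k}" "e \<noteq> Suc k" by auto
            then show ?thesis using diff_eq_mem[OF h1, of e] False unfolding z0_def z0_mem by simp
          qed simp
        qed
        then show False using False2 by simp
      qed
      then show ?thesis using True False2 by (simp add: CF_def)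
    qed
    finally show ?thesis .
  qed
  finally show ?case .
qed

definition bblk :: "nat \<Rightarrow> nat \<Rightarrow> nat set" where
  "bblk n i = (if i = 0 then {0} else {i, n + i})"

definition gC :: "nat \<Rightarrow> (nat \<Rightarrow> bool \<Rightarrow> bool \<Rightarrow> complex) \<Rightarrow> nat \<Rightarrow> qop" where
  "gC n U i = (if i = 0 then qid else ctrl_gate (n + i) i (U i))"

definition Cop :: "nat \<Rightarrow> (nat \<Rightarrow> bool \<Rightarrow> bool \<Rightarrow> complex) \<Rightarrow> qop" where
  "Cop n U x y = (\<Prod>i\<in>{0..n}. gC n U i (x \<inter> bblk n i) (y \<inter> bblk n i))"

lemma bblk_cover: "e < n + 1 + n \<Longrightarrow> \<exists>i\<in>{0..n}. e \<in> bblk n i"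
proof -
  assume e: "e < n + 1 + n"
  show ?thesis
  proof (cases "e \<le> n")
    case True
    then show ?thesis by (intro bexI[of _ e]) (auto simp: bblk_def)
  next
    case False
    then show ?thesis using e by (intro bexI[of _ "e - n"]) (auto simp: bblk_def)
  qed
qed

lemma bblk_disj: "i \<le> n \<Longrightarrow> i' \<le> n \<Longrightarrow> i \<noteq> i' \<Longrightarrow> bblk n i \<inter> bblk n i' = {}"
  by (auto simp: bblk_def)

lemma bblk_sub: "i \<le> n \<Longrightarrow> bblk n i \<subseteq> {0..<n + 1 + n}"
  by (auto simp: bblk_def)

lemma bblk_inj: "inj_on (bblk n) {0..n}"
proof (rule inj_onI)
  fix i i' assume "i \<in> {0..n}" "i' \<in> {0..n}" "bblk n i = bblk n i'"
  then show "i = i'"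
  proof (rule_tac ccontr)
    assume h: "i \<in> {0..n}" "i' \<in> {0..n}" "bblk n i = bblk n i'" "i \<noteq> i'"
    then have "bblk n i \<inter> bblk n i' = {}" using bblk_disj[of i n i'] by simp
    moreover have "i \<in> bblk n i" by (simp add: bblk_def)
    ultimately show False using h(3) by auto
  qed
qed

lemma Cop_layer:
  assumes n: "n \<ge> 1" and U: "\<forall>i\<in>{1..n}. unitary2 (U i)"
  shows "is_layer (n + 1 + n) (Cop n U)"
  unfolding is_layer_def
proof (intro exI[of _ "bblk n ` {0..n}"]
    exI[of _ "\<lambda>S. if 0 \<in> S then qid else ctrl_gate (n + Min S) (Min S) (U (Min S))"] conjI)
  have gb: "(if 0 \<in> bblk n i then qid else ctrl_gate (n + Min (bblk n i)) (Min (bblk n i)) (U (Min (bblk n i))))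
      = gC n U i" for i
    by (auto simp: bblk_def gC_def)
  show "\<forall>S\<in>bblk n ` {0..n}. S \<subseteq> {0..<n + 1 + n} \<and> (card S = 1 \<or> card S = 2) \<and>
      unitary_on S (if 0 \<in> S then qid else ctrl_gate (n + Min S) (Min S) (U (Min S)))"
  proof
    fix S assume "S \<in> bblk n ` {0..n}"
    then obtain i where i: "i \<le> n" "S = bblk n i" by auto
    show "S \<subseteq> {0..<n + 1 + n} \<and> (card S = 1 \<or> card S = 2) \<and>
      unitary_on S (if 0 \<in> S then qid else ctrl_gate (n + Min S) (Min S) (U (Min S)))"
    proof (cases "i = 0")
      case True
      then show ?thesis using i by (auto simp: bblk_def intro: unitary_qid)
    next
      case False
      have "unitary_on {i, n + i} (ctrl_gate (n + i) i (U i))"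
        using U False i n by (intro unitary_ctrl) auto
      then show ?thesis using i False n gb[of i] by (auto simp: bblk_def gC_def)
    qed
  qed
  show "\<forall>S\<in>bblk n ` {0..n}. \<forall>T\<in>bblk n ` {0..n}. S \<noteq> T \<longrightarrow> S \<inter> T = {}"
    using bblk_disj by fastforce
  show "\<Union> (bblk n ` {0..n}) = {0..<n + 1 + n}"
    using bblk_cover bblk_sub by fastforce
  show "\<forall>x\<subseteq>{0..<n + 1 + n}. \<forall>y\<subseteq>{0..<n + 1 + n}. Cop n U x y =
     (\<Prod>S\<in>bblk n ` {0..n}. (if 0 \<in> S then qid else ctrl_gate (n + Min S) (Min S) (U (Min S))) (x \<inter> S) (y \<inter> S))"
    by (simp add: prod.reindex[OF bblk_inj] gb Cop_def)
qed

lemma Cop_id: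
  assumes u: "u \<subseteq> {0..<n + 1 + n}" and y: "y \<subseteq> {0..n}" and y0: "0 \<notin> y"
  shows "Cop n U u y = (if u = y then 1 else 0)"
proof -
  have "Cop n U u y = (\<Prod>i\<in>{0..n}. if u \<inter> bblk n i = y \<inter> bblk n i then 1 else 0)"
    unfolding Cop_def
  proof (rule prod.cong)
    fix i assume i: "i \<in> {0..n}"
    have "n + i \<notin> y \<or> i = 0" using y y0 by auto
    then show "gC n U i (u \<inter> bblk n i) (y \<inter> bblk n i) = (if u \<inter> bblk n i = y \<inter> bblk n i then 1 else 0)"
      by (auto simp: gC_def ctrl_gate_def qid_def bblk_def)
  qed simp
  also have "\<dots> = (if \<forall>i\<in>{0..n}. u \<inter> bblk n i = y \<inter> bblk n i then 1 else 0)"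
    by (rule prod_ind) simp
  also have "(\<forall>i\<in>{0..n}. u \<inter> bblk n i = y \<inter> bblk n i) = (u = y)"
  proof
    assume h: "\<forall>i\<in>{0..n}. u \<inter> bblk n i = y \<inter> bblk n i"
    show "u = y"
    proof (rule set_eqI)
      fix e
      show "e \<in> u \<longleftrightarrow> e \<in> y"
      proof (cases "e < n + 1 + n")
        case True
        then obtain i where "i \<in> {0..n}" "e \<in> bblk n i" using bblk_cover by blast
        then show ?thesis using h by blast
      next
        case False
        then show ?thesis using u y by auto
      qed
    qed
  qed auto
  finally show ?thesis .
qed

definition Aset :: "nat \<Rightarrow> nat set" where
  "Aset n = {e. n < e \<and> e \<le> 2 * n}"

lemma Cop_ctrl:
  assumes n: "n \<ge> 1" and u: "u \<subseteq> {0..<n + 1 + n}" and y: "y \<subseteq> {0..n}" and y0: "0 \<in> y"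
  shows "Cop n U u (y \<union> Aset n) =
    (if 0 \<in> u \<and> Aset n \<subseteq> u then (\<Prod>i\<in>{1..n}. U i (i \<in> u) (i \<in> y)) else 0)"
proof -
  have sp: "{0..n} = insert 0 {1..n}" by auto
  have f0: "gC n U 0 (u \<inter> bblk n 0) ((y \<union> Aset n) \<inter> bblk n 0) = (if 0 \<in> u then 1 else 0)"
    using y0 by (auto simp: gC_def bblk_def qid_def)
  have fi: "gC n U i (u \<inter> bblk n i) ((y \<union> Aset n) \<inter> bblk n i) =
      (if n + i \<in> u then U i (i \<in> u) (i \<in> y) else 0)" if i: "i \<in> {1..n}" for i
  proof -
    have a: "n + i \<in> Aset n" "i \<notin> Aset n" "i \<noteq> 0" "n + i \<noteq> i" using i n by (auto simp: Aset_def)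
    have b: "(y \<union> Aset n) \<inter> {i, n + i} - {i} = {n + i}" using a by auto
    have c: "(u \<inter> {i, n + i} - {i} = {n + i}) = (n + i \<in> u)" using a by auto
    show ?thesis using a unfolding gC_def bblk_def ctrl_gate_def by (simp add: b c)
  qed
  have "Cop n U u (y \<union> Aset n) = (if 0 \<in> u then 1 else 0) *
      (\<Prod>i\<in>{1..n}. if n + i \<in> u then U i (i \<in> u) (i \<in> y) else 0)"
    unfolding Cop_def sp using f0 fi by (simp add: prod.insert)
  also have "\<dots> = (if 0 \<in> u \<and> Aset n \<subseteq> u then (\<Prod>i\<in>{1..n}. U i (i \<in> u) (i \<in> y)) else 0)"
  proof (cases "Aset n \<subseteq> u")
    case True
    then have "\<forall>i\<in>{1..n}. n + i \<in> u" by (auto simp: Aset_def)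
    then show ?thesis using True by (auto intro!: prod.cong)
  next
    case False
    then obtain e where "e \<in> Aset n" "e \<notin> u" by auto
    then have "e - n \<in> {1..n}" "n + (e - n) \<notin> u" by (auto simp: Aset_def)
    then have "(\<Prod>i\<in>{1..n}. if n + i \<in> u then U i (i \<in> u) (i \<in> y) else 0) = 0"
      by (intro prod_zero) auto
    then show ?thesis using False by simp
  qed
  finally show ?thesis .
qed

lemma xorl_inv: "(\<And>t. t \<in> Tg \<Longrightarrow> c t \<notin> Tg) \<Longrightarrow> xorl Tg c (xorl Tg c y) = y"
  unfolding xorl_def by auto

lemma xorl_sub: "Tg \<subseteq> D \<Longrightarrow> y \<subseteq> D \<Longrightarrow> xorl Tg c y \<subseteq> D"
  unfolding xorl_def by auto

definition Tgj :: "nat \<Rightarrow> nat \<Rightarrow> nat set" where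
  "Tgj n j = {e. n + 2^j \<le> e \<and> e < n + 2*2^j \<and> e \<le> 2*n}"

definition cj :: "nat \<Rightarrow> nat \<Rightarrow> nat \<Rightarrow> nat" where
  "cj n j e = (if e = n + 2^j then 0 else e - 2^j)"

definition tau :: "nat \<Rightarrow> nat \<Rightarrow> nat set \<Rightarrow> nat set" where
  "tau n j = xorl (Tgj n j) (cj n j)"

lemma Tgj_sub: "Tgj n j \<subseteq> {0..<n + 1 + n}"
  unfolding Tgj_def by auto

lemma cj_notin: "t \<in> Tgj n j \<Longrightarrow> cj n j t \<notin> Tgj n j"
  unfolding Tgj_def cj_def by auto

lemma tau_layer: "is_layer (n + 1 + n) (perm_op (tau n j))"
  unfolding tau_def
proof (rule xor_layer)
  show "Tgj n j \<subseteq> {0..<n + 1 + n}" by (rule Tgj_sub)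
  show "\<And>t. t \<in> Tgj n j \<Longrightarrow> cj n j t < n + 1 + n" unfolding Tgj_def cj_def by auto
  show "\<And>t. t \<in> Tgj n j \<Longrightarrow> cj n j t \<notin> Tgj n j" by (rule cj_notin)
  show "inj_on (cj n j) (Tgj n j)"
  proof (rule inj_onI)
    fix a b assume "a \<in> Tgj n j" "b \<in> Tgj n j" "cj n j a = cj n j b"
    then show "a = b" unfolding Tgj_def cj_def by (auto split: if_splits)
  qed
qed

lemma tau_inv: "tau n j (tau n j y) = y"
  unfolding tau_def by (rule xorl_inv) (rule cj_notin)

lemma tau_sub: "y \<subseteq> {0..<n + 1 + n} \<Longrightarrow> tau n j y \<subseteq> {0..<n + 1 + n}"
  unfolding tau_def by (rule xorl_sub[OF Tgj_sub])

definition state :: "nat \<Rightarrow> nat \<Rightarrow> nat set \<Rightarrow> nat set" where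
  "state n j w = w \<union> (if 0 \<in> w then {e. n < e \<and> e < n + 2^j \<and> e \<le> 2*n} else {})"

lemma tau_state:
  assumes w: "w \<subseteq> {0..n}"
  shows "tau n j (state n j w) = state n (Suc j) w"
proof (rule set_eqI)
  fix e
  show "e \<in> tau n j (state n j w) \<longleftrightarrow> e \<in> state n (Suc j) w"
  proof (cases "e \<in> Tgj n j")
    case True
    then have e: "n + 2^j \<le> e" "e < n + 2*2^j" "e \<le> 2*n" by (auto simp: Tgj_def)
    have "e \<notin> w" using w e by auto
    then have "e \<notin> state n j w" using e by (auto simp: state_def)
    moreover have "cj n j e \<in> state n j w \<longleftrightarrow> 0 \<in> w"
    proof (cases "e = n + 2^j")
      case True
      then show ?thesis by (auto simp: cj_def state_def)
    next
      case False
      then have "cj n j e = e - 2^j" "n < e - 2^j" "e - 2^j < n + 2^j" using e by (auto simp: cj_def)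
      moreover have "e - 2^j \<notin> w" using w \<open>n < e - 2^j\<close> by auto
      ultimately show ?thesis using e by (auto simp: state_def)
    qed
    moreover have "e \<in> state n (Suc j) w \<longleftrightarrow> 0 \<in> w" using e \<open>e \<notin> w\<close> by (auto simp: state_def)
    ultimately show ?thesis using True unfolding tau_def xorl_def by auto
  next
    case False
    then have "e \<in> state n (Suc j) w \<longleftrightarrow> e \<in> state n j w"
      by (auto simp: state_def Tgj_def)
    then show ?thesis using False unfolding tau_def xorl_def by auto
  qed
qed

fun app :: "('a \<Rightarrow> 'a) list \<Rightarrow> 'a \<Rightarrow> 'a" where
  "app [] x = x"
| "app (t # ts) x = app ts (t x)"

lemma app_snoc: "app (ts @ [t]) x = t (app ts x)"
  by (induction ts arbitrary: x) auto

lemma app_state: "w \<subseteq> {0..n} \<Longrightarrow> app (map (tau n) [0..<j]) w = state n j w"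
proof (induction j)
  case 0
  then show ?case by (auto simp: state_def)
next
  case (Suc j)
  then show ?case by (simp add: app_snoc tau_state)
qed

lemma state_full: "n < 2^J \<Longrightarrow> state n J w = w \<union> (if 0 \<in> w then Aset n else {})"
  unfolding state_def Aset_def by auto

lemma app_sub: "(\<forall>t\<in>set ts. \<forall>y. y \<subseteq> D \<longrightarrow> t y \<subseteq> D) \<Longrightarrow> x \<subseteq> D \<Longrightarrow> app ts x \<subseteq> D"
  by (induction ts arbitrary: x) auto

lemma app_rev: "(\<forall>t\<in>set ts. \<forall>y. t (t y) = y) \<Longrightarrow> app (rev ts) (app ts y) = y"
  by (induction ts arbitrary: y) (auto simp: app_snoc)

lemma qmult_perm_left:
  assumes "\<And>y. y \<subseteq> {0..<N} \<Longrightarrow> \<tau> y \<subseteq> {0..<N}" "\<And>y. \<tau> (\<tau> y) = y" "x \<subseteq> {0..<N}"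
  shows "qmult N (perm_op \<tau>) B x y = B (\<tau> x) y"
proof -
  have "qmult N (perm_op \<tau>) B x y = (\<Sum>z\<in>Pow {0..<N}. if z = \<tau> x then B (\<tau> x) y else 0)"
    unfolding qmult_def perm_op_def
  proof (rule sum.cong)
    fix z
    have "(x = \<tau> z) = (z = \<tau> x)" using assms(2) by metis
    then show "(if x = \<tau> z then 1 else 0) * B z y = (if z = \<tau> x then B (\<tau> x) y else 0)" by auto
  qed simp
  also have "\<dots> = B (\<tau> x) y" using assms by (subst sum.delta) auto
  finally show ?thesis .
qed

definition good :: "nat \<Rightarrow> (nat set \<Rightarrow> nat set) \<Rightarrow> bool" where
  "good N t \<longleftrightarrow> (\<forall>y. y \<subseteq> {0..<N} \<longrightarrow> t y \<subseteq> {0..<N}) \<and> (\<forall>y. t (t y) = y)"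

lemma prodL_perms:
  "\<forall>t\<in>set ts. good N t \<Longrightarrow> x \<subseteq> {0..<N} \<Longrightarrow> prodL N (map perm_op ts @ R) x y = prodL N R (app ts x) y"
proof (induction ts arbitrary: x)
  case Nil
  then show ?case by simp
next
  case (Cons t ts)
  have g: "good N t" using Cons by simp
  have "prodL N (map perm_op (t # ts) @ R) x y = qmult N (perm_op t) (prodL N (map perm_op ts @ R)) x y"
    by simp
  also have "\<dots> = prodL N (map perm_op ts @ R) (t x) y"
    using g Cons.prems by (intro qmult_perm_left) (auto simp: good_def)
  also have "\<dots> = prodL N R (app ts (t x)) y"
    using g Cons by (intro Cons.IH) (auto simp: good_def)
  finally show ?case by simp
qed

lemma prodL_rev:
  assumes g: "\<forall>t\<in>set ts. good N t" and z: "z \<subseteq> {0..<N}" and y: "y \<subseteq> {0..<N}"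
  shows "prodL N (rev (map perm_op ts)) z y = (if z = app ts y then 1 else 0)"
proof -
  have g': "\<forall>t\<in>set (rev ts). good N t" using g by simp
  have "prodL N (rev (map perm_op ts)) z y = prodL N (map perm_op (rev ts) @ []) z y"
    by (simp add: rev_map)
  also have "\<dots> = qid (app (rev ts) z) y" using prodL_perms[OF g' z, of "[]"] by simp
  moreover have "(app (rev ts) z = y) = (z = app ts y)"
  proof
    assume "app (rev ts) z = y"
    then have "app (rev (rev ts)) (app (rev ts) z) = app (rev (rev ts)) y" by simp
    then show "z = app ts y" using app_rev[of "rev ts" z] g' by (auto simp: good_def)
  next
    assume "z = app ts y"
    then show "app (rev ts) z = y" using app_rev[of ts y] g by (auto simp: good_def)
  qed
  ultimately show ?thesis by (simp add: qid_def)
qed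

lemma qmult_right:
  assumes "\<And>z. z \<subseteq> {0..<N} \<Longrightarrow> B z y = (if z = w then 1 else 0)" "w \<subseteq> {0..<N}"
  shows "qmult N A B x y = A x w"
proof -
  have "qmult N A B x y = (\<Sum>z\<in>Pow {0..<N}. if z = w then A x w else 0)"
    unfolding qmult_def using assms(1) by (intro sum.cong) auto
  also have "\<dots> = A x w" using assms(2) by (subst sum.delta) auto
  finally show ?thesis .
qed

lemma assembly:
  assumes g: "\<forall>t\<in>set ts. good N t" and x: "x \<subseteq> {0..<N}" and y: "y \<subseteq> {0..<N}"
  shows "prodL N (map perm_op ts @ C # rev (map perm_op ts)) x y = C (app ts x) (app ts y)"
proof -
  have s: "app ts y \<subseteq> {0..<N}" using g y by (intro app_sub) (auto simp: good_def)
  have "prodL N (map perm_op ts @ C # rev (map perm_op ts)) x y = prodL N (C # rev (map perm_op ts)) (app ts x) y"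
    by (rule prodL_perms[OF g x])
  also have "\<dots> = C (app ts x) (app ts y)"
    using prodL_rev[OF g _ y] s by (simp add: qmult_right)
  finally show ?thesis .
qed

lemma exJ: "(n::nat) \<ge> 1 \<Longrightarrow> \<exists>J. n < 2^J \<and> 2^J \<le> 2*n"
proof (induction n rule: less_induct)
  case (less n)
  show ?case
  proof (cases "n = 1")
    case True
    then show ?thesis by (intro exI[of _ 1]) simp
  next
    case False
    then have "n div 2 \<ge> 1" "n div 2 < n" using less.prems by auto
    then obtain J where J: "n div 2 < 2^J" "2^J \<le> 2 * (n div 2)" using less.IH by blast
    have "n < 2^Suc J" using J(1) by simp
    moreover have "2^Suc J \<le> 2 * n" using J(2) by simp
    ultimately show ?thesis by blast
  qed
qed

lemma main_embed:
  assumes n: "n \<ge> 1" and U: "\<forall>i\<in>{1..n}. unitary2 (U i)" and J: "n < 2^J"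
  shows "circuit (n + 1 + n) (2*J+1)
           (prodL (n + 1 + n) (map perm_op (map (tau n) [0..<J]) @ Cop n U # rev (map perm_op (map (tau n) [0..<J]))))
       \<and> embeds (n + 1) n (ctrl_prod (n + 1) U n)
           (prodL (n + 1 + n) (map perm_op (map (tau n) [0..<J]) @ Cop n U # rev (map perm_op (map (tau n) [0..<J]))))"
proof -
  define ts where "ts = map (tau n) [0..<J]"
  define N where "N = n + 1 + n"
  define M where "M = prodL N (map perm_op ts @ Cop n U # rev (map perm_op ts))"
  have g: "\<forall>t\<in>set ts. good N t"
    unfolding ts_def N_def good_def using tau_sub tau_inv by auto
  have circ: "circuit N (2*J+1) M"
  proof -
    have "circuit N (length (map perm_op ts @ Cop n U # rev (map perm_op ts))) M"
      unfolding M_def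
    proof (rule circuit_prodL)
      show "\<forall>L\<in>set (map perm_op ts @ Cop n U # rev (map perm_op ts)). is_layer N L"
        unfolding ts_def N_def using tau_layer Cop_layer[OF n U] by auto
    qed
    moreover have "length (map perm_op ts @ Cop n U # rev (map perm_op ts)) = 2*J+1"
      unfolding ts_def by simp
    ultimately show ?thesis by simp
  qed
  define \<sigma> where "\<sigma> = app ts"
  have \<sigma>D: "\<sigma> x \<subseteq> {0..<N}" if "x \<subseteq> {0..<N}" for x
    unfolding \<sigma>_def using g that by (intro app_sub) (auto simp: good_def)
  have \<sigma>inj: "a = b" if "\<sigma> a = \<sigma> b" for a b
  proof -
    have inv: "\<forall>t\<in>set ts. \<forall>y. t (t y) = y" using g by (auto simp: good_def)
    have "app (rev ts) (\<sigma> a) = app (rev ts) (\<sigma> b)" using that by simp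
    then show ?thesis using app_rev[OF inv, of a] app_rev[OF inv, of b] unfolding \<sigma>_def by simp
  qed
  have \<sigma>w: "\<sigma> w = w \<union> (if 0 \<in> w then Aset n else {})" if "w \<subseteq> {0..n}" for w
    unfolding \<sigma>_def ts_def using app_state[OF that] state_full[OF J] by simp
  have emb: "embeds (n + 1) n (ctrl_prod (n + 1) U n) M"
    unfolding embeds_def
  proof (intro allI impI)
    fix x y assume x: "x \<subseteq> {0..<n + 1 + n}" and y: "y \<subseteq> {0..<n + 1}"
    have y': "y \<subseteq> {0..n}" using y by auto
    have yN: "y \<subseteq> {0..<N}" using y unfolding N_def by auto
    have xN: "x \<subseteq> {0..<N}" using x unfolding N_def by auto
    have Mxy: "M x y = Cop n U (\<sigma> x) (\<sigma> y)"
      unfolding M_def \<sigma>_def by (rule assembly[OF g xN yN])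
    have uD: "\<sigma> x \<subseteq> {0..<n + 1 + n}" using \<sigma>D[OF xN] unfolding N_def .
    have cp: "ctrl_prod (n + 1) U n x y = CF U n x y" if "x \<subseteq> {0..<n + 1}"
      using that y by (intro ctrl_prod_cf) auto
    show "M x y = (if x \<subseteq> {0..<n + 1} then ctrl_prod (n + 1) U n x y else 0)"
    proof (cases "0 \<in> y")
      case False
      have sy: "\<sigma> y = y" using \<sigma>w[OF y'] False by simp
      have "M x y = (if \<sigma> x = y then 1 else 0)"
        unfolding Mxy sy using Cop_id[OF uD y' False] .
      also have "(\<sigma> x = y) = (x = y)" using \<sigma>inj[of x y] sy by auto
      finally show ?thesis using cp y False by (auto simp: CF_def qid_def)
    next
      case True
      have sy: "\<sigma> y = y \<union> Aset n" using \<sigma>w[OF y'] True by simp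
      have "M x y = (if 0 \<in> \<sigma> x \<and> Aset n \<subseteq> \<sigma> x then (\<Prod>i\<in>{1..n}. U i (i \<in> \<sigma> x) (i \<in> y)) else 0)"
        unfolding Mxy sy using Cop_ctrl[OF n uD y' True] .
      also have "\<dots> = (if x \<subseteq> {0..<n + 1} then CF U n x y else 0)"
      proof (cases "x \<subseteq> {0..<n + 1} \<and> 0 \<in> x")
        case True2: True
        then have x': "x \<subseteq> {0..n}" by auto
        have sx: "\<sigma> x = x \<union> Aset n" using \<sigma>w[OF x'] True2 by simp
        have nA: "i \<notin> Aset n" if "i \<in> {1..n}" for i using that by (auto simp: Aset_def)
        have pr: "(\<Prod>i\<in>{1..n}. U i (i \<in> \<sigma> x) (i \<in> y)) = (\<Prod>i\<in>{1..n}. U i (i \<in> x) (i \<in> y))"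
          unfolding sx using nA by (intro prod.cong) auto
        have d: "x - {1..n} = y - {1..n}"
        proof -
          have "x - {1..n} = {0}" using x' True2 by auto
          moreover have "y - {1..n} = {0}" using y' True by auto
          ultimately show ?thesis by simp
        qed
        have c: "0 \<in> \<sigma> x \<and> Aset n \<subseteq> \<sigma> x" using sx True2 by auto
        have xs: "x \<subseteq> {0..<n + 1}" using True2 by simp
        show ?thesis unfolding if_P[OF c] pr if_P[OF xs] CF_def if_P[OF True] if_P[OF d] ..
      next
        case False2: False
        have "\<not> (0 \<in> \<sigma> x \<and> Aset n \<subseteq> \<sigma> x)"
        proof
          assume h: "0 \<in> \<sigma> x \<and> Aset n \<subseteq> \<sigma> x"
          define w where "w = \<sigma> x \<inter> {0..n}"
          have w': "w \<subseteq> {0..n}" "0 \<in> w" using h unfolding w_def by auto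
          have "\<sigma> w = w \<union> Aset n" using \<sigma>w[OF w'(1)] w'(2) by simp
          also have "\<dots> = \<sigma> x"
          proof
            show "w \<union> Aset n \<subseteq> \<sigma> x" using h unfolding w_def by auto
            show "\<sigma> x \<subseteq> w \<union> Aset n" using uD unfolding w_def Aset_def by auto
          qed
          finally have "w = x" using \<sigma>inj by metis
          then show False using False2 w' by auto
        qed
        moreover have "x \<subseteq> {0..<n + 1} \<Longrightarrow> CF U n x y = 0"
        proof -
          assume xs: "x \<subseteq> {0..<n + 1}"
          then have "0 \<notin> x" using False2 by simp
          then have "0 \<notin> x - {1..n}" by simp
          moreover have "0 \<in> y - {1..n}" using True by simp
          ultimately have "x - {1..n} \<noteq> y - {1..n}" by metis
          then show "CF U n x y = 0" using True by (simp add: CF_def)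
        qed
        ultimately show ?thesis by auto
      qed
      finally show ?thesis using cp by auto
    qed
  qed
  show ?thesis using circ emb unfolding M_def N_def ts_def by simp
qed

lemma depth_bound:
  assumes n: "(n::nat) \<ge> 2" and J: "2^J \<le> 2*n"
  shows "real (2*J+1) \<le> 5 * log 2 (real n)"
proof -
  have "real (2^J) \<le> real (2*n)" using J by (simp only: of_nat_le_iff)
  then have "(2::real)^J \<le> 2 * real n" by simp
  then have "log 2 ((2::real)^J) \<le> log 2 (2 * real n)"
    by (intro log_mono) auto
  then have "real J \<le> 1 + log 2 (real n)"
    using n by (simp add: log_mult_pos)
  moreover have "log 2 2 \<le> log 2 (real n)" using n by (intro log_mono) auto
  ultimately show ?thesis by simp
qed

theorem proposition2:
  shows "\<exists>c::real. c > 0 \<and>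
    (\<forall>n::nat. n \<ge> 1 \<longrightarrow>
      (\<forall>U :: nat \<Rightarrow> bool \<Rightarrow> bool \<Rightarrow> complex. (\<forall>i\<in>{1..n}. unitary2 (U i)) \<longrightarrow>
        (\<exists>m k M. real m \<le> c * real n \<and> (n \<ge> 2 \<longrightarrow> real k \<le> c * log 2 (real n)) \<and>
           circuit (n + 1 + m) k M \<and> embeds (n + 1) m (ctrl_prod (n + 1) U n) M)))"
proof -
  have main: "\<forall>n::nat. n \<ge> 1 \<longrightarrow>
      (\<forall>U :: nat \<Rightarrow> bool \<Rightarrow> bool \<Rightarrow> complex. (\<forall>i\<in>{1..n}. unitary2 (U i)) \<longrightarrow>
        (\<exists>m k M. real m \<le> 5 * real n \<and> (n \<ge> 2 \<longrightarrow> real k \<le> 5 * log 2 (real n)) \<and>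
           circuit (n + 1 + m) k M \<and> embeds (n + 1) m (ctrl_prod (n + 1) U n) M))"
  proof (intro allI impI)
  fix n :: nat and U :: "nat \<Rightarrow> bool \<Rightarrow> bool \<Rightarrow> complex"
  assume n: "n \<ge> 1" and U: "\<forall>i\<in>{1..n}. unitary2 (U i)"
  obtain J where J: "n < 2^J" "2^J \<le> 2*n" using exJ[OF n] by blast
  show "\<exists>m k M. real m \<le> 5 * real n \<and> (n \<ge> 2 \<longrightarrow> real k \<le> 5 * log 2 (real n)) \<and>
           circuit (n + 1 + m) k M \<and> embeds (n + 1) m (ctrl_prod (n + 1) U n) M"
  proof (intro exI conjI)
    show "real n \<le> 5 * real n" by simp
    show "n \<ge> 2 \<longrightarrow> real (2*J+1) \<le> 5 * log 2 (real n)" using depth_bound[OF _ J(2)] by blast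
    show "circuit (n + 1 + n) (2*J+1) (prodL (n + 1 + n) (map perm_op (map (tau n) [0..<J]) @ Cop n U # rev (map perm_op (map (tau n) [0..<J]))))"
      using main_embed[OF n U J(1)] by blast
    show "embeds (n + 1) n (ctrl_prod (n + 1) U n) (prodL (n + 1 + n) (map perm_op (map (tau n) [0..<J]) @ Cop n U # rev (map perm_op (map (tau n) [0..<J]))))"
      using main_embed[OF n U J(1)] by blast
  qed
  qed
  have "(5::real) > 0" by simp
  with main show ?thesis by blast
qed

end
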